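(* Let $\Omega$ be a Polish space. For every capacity $c$ on $\mathcal{L}$, the non-negative part $K_+$ of the unit ball of $L^1(c)^*$ is compact metrizable for the weak* topology $\sigma(L^1(c)^*,L^1(c))$.
   Context: $\mathcal{L}\subset\mathcal{C}_b(\Omega)$ is a linear subspace which is a vector lattice, contains the constants and generates the topology. A capacity on $\mathcal{L}$ is a seminorm $c$ with $c(f)\le c(g)$ whenever $|f|\le|g|$ and $\inf_n c(f_n)=0$ for $f_n\in\mathcal{L}$ decreasing to $0$; it is extended to all functions by $c(f)=\sup\{c(\varphi):\varphi\in\mathcal{L},0\le\varphi\le f\}$ for $f\ge0$ l.s.c. and $c(g)=\inf\{c(f):f\text{ l.s.c.},f\ge|g|\}$. $L^1(c)$ is the Banach space obtained as the quotient by $c$-null elements of the $c$-closure of $\mathcal{L}$ in $\{g:c(g)<\infty\}$. Order on $L^1(c)$: $X\ge0$ iff some $f_n\in\mathcal{L}$, $f_n\ge0$, satisfy $c(g-f_n)\to0$ for every representative $g$ of $X$. $K_+$ is the set of non-negative continuous linear forms on $L^1(c)$ of norm $\le1$. *)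

theory Defs
  imports "HOL-Analysis.Analysis"
begin

definition admissible_space :: "('a::topological_space \<Rightarrow> real) set \<Rightarrow> bool" where
  "admissible_space L \<longleftrightarrow>
     (\<forall>f\<in>L. continuous_on UNIV f \<and> bounded (range f)) \<and>
     (\<forall>f\<in>L. \<forall>g\<in>L. (\<lambda>x. f x + g x) \<in> L) \<and>
     (\<forall>f\<in>L. \<forall>a::real. (\<lambda>x. a * f x) \<in> L) \<and>
     (\<forall>f\<in>L. (\<lambda>x. max (f x) 0) \<in> L) \<and>
     (\<forall>a::real. (\<lambda>x. a) \<in> L) \<and>
     topology_generated_by {f -` U | f U. f \<in> L \<and> open U} = (euclidean :: 'a topology)"

definition capacity :: "('a \<Rightarrow> real) set \<Rightarrow> (('a \<Rightarrow> real) \<Rightarrow> real) \<Rightarrow> bool" where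
  "capacity L c \<longleftrightarrow>
     (\<forall>f\<in>L. \<forall>g\<in>L. c (\<lambda>x. f x + g x) \<le> c f + c g) \<and>
     (\<forall>f\<in>L. \<forall>a::real. c (\<lambda>x. a * f x) = \<bar>a\<bar> * c f) \<and>
     (\<forall>f\<in>L. 0 \<le> c f) \<and>
     (\<forall>f\<in>L. \<forall>g\<in>L. (\<forall>x. \<bar>f x\<bar> \<le> \<bar>g x\<bar>) \<longrightarrow> c f \<le> c g) \<and>
     (\<forall>F::nat \<Rightarrow> 'a \<Rightarrow> real. (\<forall>n. F n \<in> L) \<and> (\<forall>n x. F (Suc n) x \<le> F n x) \<and>
         (\<forall>x. (\<lambda>n. F n x) \<longlonglongrightarrow> 0) \<longrightarrow> (INF n. c (F n)) = 0)"

definition lsc :: "('a::topological_space \<Rightarrow> ereal) \<Rightarrow> bool" where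
  "lsc f \<longleftrightarrow> (\<forall>t. open {x. t < f x})"

definition cap_lsc :: "('a \<Rightarrow> real) set \<Rightarrow> (('a \<Rightarrow> real) \<Rightarrow> real) \<Rightarrow> ('a \<Rightarrow> ereal) \<Rightarrow> ereal" where
  "cap_lsc L c f = (SUP \<phi>\<in>{\<phi>\<in>L. \<forall>x. 0 \<le> \<phi> x \<and> ereal (\<phi> x) \<le> f x}. ereal (c \<phi>))"

definition cap_ext :: "('a::topological_space \<Rightarrow> real) set \<Rightarrow> (('a \<Rightarrow> real) \<Rightarrow> real) \<Rightarrow> ('a \<Rightarrow> real) \<Rightarrow> ereal" where
  "cap_ext L c g = (INF f\<in>{f. lsc f \<and> (\<forall>x. ereal \<bar>g x\<bar> \<le> f x)}. cap_lsc L c f)"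

definition L1_dom :: "('a::topological_space \<Rightarrow> real) set \<Rightarrow> (('a \<Rightarrow> real) \<Rightarrow> real) \<Rightarrow> ('a \<Rightarrow> real) set" where
  "L1_dom L c = {g. cap_ext L c g < \<infinity> \<and>
       (\<forall>e>0. \<exists>f\<in>L. cap_ext L c (\<lambda>x. g x - f x) < ereal e)}"

definition L1_rel :: "('a::topological_space \<Rightarrow> real) set \<Rightarrow> (('a \<Rightarrow> real) \<Rightarrow> real) \<Rightarrow> (('a \<Rightarrow> real) \<times> ('a \<Rightarrow> real)) set" where
  "L1_rel L c = {(g, h). g \<in> L1_dom L c \<and> h \<in> L1_dom L c \<and> cap_ext L c (\<lambda>x. g x - h x) = 0}"

definition L1 :: "('a::topological_space \<Rightarrow> real) set \<Rightarrow> (('a \<Rightarrow> real) \<Rightarrow> real) \<Rightarrow> ('a \<Rightarrow> real) set set" where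
  "L1 L c = L1_dom L c // L1_rel L c"

definition L1_class :: "('a::topological_space \<Rightarrow> real) set \<Rightarrow> (('a \<Rightarrow> real) \<Rightarrow> real) \<Rightarrow> ('a \<Rightarrow> real) \<Rightarrow> ('a \<Rightarrow> real) set" where
  "L1_class L c g = L1_rel L c `` {g}"

definition L1_nonneg :: "('a::topological_space \<Rightarrow> real) set \<Rightarrow> (('a \<Rightarrow> real) \<Rightarrow> real) \<Rightarrow> ('a \<Rightarrow> real) set \<Rightarrow> bool" where
  "L1_nonneg L c X \<longleftrightarrow> (\<exists>F::nat \<Rightarrow> 'a \<Rightarrow> real. (\<forall>n. F n \<in> L \<and> (\<forall>x. 0 \<le> F n x)) \<and>
       (\<forall>g\<in>X. (\<lambda>n. cap_ext L c (\<lambda>x. g x - F n x)) \<longlonglongrightarrow> 0))"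

text \<open>K_+: non-negative continuous linear forms on L^1(c) of norm at most 1,
  represented as (extensional) real functions on the set L1 L c.
  The norm of the class of g is c(g).\<close>
definition Kplus :: "('a::topological_space \<Rightarrow> real) set \<Rightarrow> (('a \<Rightarrow> real) \<Rightarrow> real) \<Rightarrow> (('a \<Rightarrow> real) set \<Rightarrow> real) set" where
  "Kplus L c = {\<phi>. \<phi> \<in> extensional (L1 L c) \<and>
     (\<forall>g\<in>L1_dom L c. \<forall>h\<in>L1_dom L c. \<forall>a b::real.
        \<phi> (L1_class L c (\<lambda>x. a * g x + b * h x)) = a * \<phi> (L1_class L c g) + b * \<phi> (L1_class L c h)) \<and>
     (\<forall>g\<in>L1_dom L c. ereal \<bar>\<phi> (L1_class L c g)\<bar> \<le> cap_ext L c g) \<and>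
     (\<forall>X\<in>L1 L c. L1_nonneg L c X \<longrightarrow> 0 \<le> \<phi> X)}"

text \<open>The weak* topology sigma(L^1(c)^*, L^1(c)): pointwise convergence on L^1(c).\<close>
definition weak_star :: "('a::topological_space \<Rightarrow> real) set \<Rightarrow> (('a \<Rightarrow> real) \<Rightarrow> real) \<Rightarrow> (('a \<Rightarrow> real) set \<Rightarrow> real) topology" where
  "weak_star L c = product_topology (\<lambda>_. euclideanreal) (L1 L c)"

end

theory Submission
  imports Defs
begin

datatype expr = Gen nat | Cst rat | Add expr expr | Smul rat expr | Mn expr expr

instance expr :: countable by countable_datatype

fun ev :: "(nat \<Rightarrow> 'a \<Rightarrow> real) \<Rightarrow> expr \<Rightarrow> 'a \<Rightarrow> real" where
  "ev gs (Gen n) = gs n"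
| "ev gs (Cst q) = (\<lambda>y. real_of_rat q)"
| "ev gs (Add a b) = (\<lambda>y. ev gs a y + ev gs b y)"
| "ev gs (Smul q a) = (\<lambda>y. real_of_rat q * ev gs a y)"
| "ev gs (Mn a b) = (\<lambda>y. min (ev gs a y) (ev gs b y))"

locale capsetup =
  fixes L :: "('a::polish_space \<Rightarrow> real) set"
    and c :: "('a \<Rightarrow> real) \<Rightarrow> real"
  assumes adm: "admissible_space L"
    and cap: "capacity L c"
begin

lemma L_add: "f \<in> L \<Longrightarrow> g \<in> L \<Longrightarrow> (\<lambda>x. f x + g x) \<in> L"
  using adm unfolding admissible_space_def by blast
lemma L_smul: "f \<in> L \<Longrightarrow> (\<lambda>x. a * f x) \<in> L"
  using adm unfolding admissible_space_def by blast
lemma L_pos: "f \<in> L \<Longrightarrow> (\<lambda>x. max (f x) 0) \<in> L"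
  using adm unfolding admissible_space_def by blast
lemma L_const: "(\<lambda>x. a) \<in> L"
  using adm unfolding admissible_space_def by blast
lemma L_cont: "f \<in> L \<Longrightarrow> continuous_on UNIV f"
  using adm unfolding admissible_space_def by blast
lemma L_bdd: "f \<in> L \<Longrightarrow> bounded (range f)"
  using adm unfolding admissible_space_def by blast
lemma L_gen: "topology_generated_by {f -` U | f U. f \<in> L \<and> open U} = (euclidean :: 'a topology)"
  using adm unfolding admissible_space_def by blast

lemma L_diff: "f \<in> L \<Longrightarrow> g \<in> L \<Longrightarrow> (\<lambda>x. f x - g x) \<in> L"
proof -
  assume "f \<in> L" "g \<in> L"
  then have "(\<lambda>x. f x + (-1) * g x) \<in> L" using L_add L_smul by blast
  then show ?thesis by simp
qed

lemma L_abs: "f \<in> L \<Longrightarrow> (\<lambda>x. \<bar>f x\<bar>) \<in> L"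
proof -
  assume f: "f \<in> L"
  have "(\<lambda>x. max (f x) 0 + max ((-1) * f x) 0) \<in> L"
    using f L_add L_smul L_pos by blast
  moreover have "(\<lambda>x. max (f x) 0 + max ((-1) * f x) 0) = (\<lambda>x. \<bar>f x\<bar>)"
    by (auto simp: fun_eq_iff)
  ultimately show ?thesis by simp
qed

lemma L_min: "f \<in> L \<Longrightarrow> g \<in> L \<Longrightarrow> (\<lambda>x. min (f x) (g x)) \<in> L"
proof -
  assume f: "f \<in> L" and g: "g \<in> L"
  have "(\<lambda>x. f x - max (f x - g x) 0) \<in> L"
    using f g L_diff L_pos by blast
  moreover have "(\<lambda>x. f x - max (f x - g x) 0) = (\<lambda>x. min (f x) (g x))"
    by (auto simp: fun_eq_iff)
  ultimately show ?thesis by simp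
qed

lemma c_mono: "f \<in> L \<Longrightarrow> g \<in> L \<Longrightarrow> (\<And>x. \<bar>f x\<bar> \<le> \<bar>g x\<bar>) \<Longrightarrow> c f \<le> c g"
  using cap unfolding capacity_def by blast

lemma c_daniell: "(\<And>n. F n \<in> L) \<Longrightarrow> (\<And>n x. F (Suc n) x \<le> F n x) \<Longrightarrow>
   (\<And>x. (\<lambda>n. F n x) \<longlonglongrightarrow> 0) \<Longrightarrow> (INF n. c (F n)) = 0"
  using cap unfolding capacity_def by blast

lemma c_nonneg: "f \<in> L \<Longrightarrow> 0 \<le> c f"
  using cap unfolding capacity_def by blast

lemma c_zero: "c (\<lambda>x. 0) = 0"
proof -
  have "\<forall>f\<in>L. \<forall>a. c (\<lambda>x. a * f x) = \<bar>a\<bar> * c f"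
    using cap unfolding capacity_def by blast
  from bspec[OF this L_const[of 0]]
  have "c (\<lambda>x. 0 * (\<lambda>x. (0::real)) x) = \<bar>0\<bar> * c (\<lambda>x. 0)"
    by (rule allE)
  then show ?thesis by simp
qed

lemma lsc_L: "f \<in> L \<Longrightarrow> lsc (\<lambda>x. ereal \<bar>f x\<bar>)"
proof -
  assume f: "f \<in> L"
  have "continuous_on UNIV (\<lambda>x. ereal \<bar>f x\<bar>)"
    by (intro continuous_on_ereal continuous_intros L_cont f)
  then show ?thesis unfolding lsc_def
  proof (intro allI)
    fix t :: ereal
    assume "continuous_on UNIV (\<lambda>x. ereal \<bar>f x\<bar>)"
    then have "open ((\<lambda>x. ereal \<bar>f x\<bar>) -` {t<..})"
      using continuous_on_open_vimage[of UNIV "\<lambda>x. ereal \<bar>f x\<bar>"] by auto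
    then show "open {x. t < ereal \<bar>f x\<bar>}" by (simp add: vimage_def)
  qed
qed

lemma cap_ext_L: assumes f: "f \<in> L" shows "cap_ext L c f \<le> ereal (c (\<lambda>x. \<bar>f x\<bar>))"
proof -
  have "cap_ext L c f \<le> cap_lsc L c (\<lambda>x. ereal \<bar>f x\<bar>)"
    unfolding cap_ext_def by (rule INF_lower) (use lsc_L[OF f] in auto)
  also have "\<dots> \<le> ereal (c (\<lambda>x. \<bar>f x\<bar>))"
    unfolding cap_lsc_def
  proof (rule SUP_least)
    fix \<phi> assume "\<phi> \<in> {\<phi> \<in> L. \<forall>x. 0 \<le> \<phi> x \<and> ereal (\<phi> x) \<le> ereal \<bar>f x\<bar>}"
    then show "ereal (c \<phi>) \<le> ereal (c (\<lambda>x. \<bar>f x\<bar>))"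
      using c_mono[of \<phi> "\<lambda>x. \<bar>f x\<bar>"] L_abs[OF f] by auto
  qed
  finally show ?thesis .
qed

definition bumpP :: "'a set \<Rightarrow> 'a \<Rightarrow> ('a \<Rightarrow> real) \<Rightarrow> bool" where
  "bumpP W x b \<longleftrightarrow> b \<in> L \<and> (\<forall>y. 0 \<le> b y \<and> b y \<le> 1) \<and> b x = 1 \<and> (\<forall>y. y \<notin> W \<longrightarrow> b y = 0)"

lemma bump_gen:
  assumes "generate_topology_on {f -` U | f U. f \<in> L \<and> open U} W" "x \<in> W"
  shows "\<exists>b. bumpP W x b"
  using assms
proof (induction arbitrary: x rule: generate_topology_on.induct)
  case Empty
  then show ?case by simp
next
  case (Int a b)
  then obtain b1 b2 where b1: "bumpP a x b1" and b2: "bumpP b x b2" by blast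
  have "bumpP (a \<inter> b) x (\<lambda>y. min (b1 y) (b2 y))"
    using b1 b2 L_min unfolding bumpP_def by (auto simp: min_le_iff_disj)
  then show ?case by blast
next
  case (UN K)
  then obtain k where "k \<in> K" "x \<in> k" by blast
  with UN obtain b where "bumpP k x b" by blast
  then have "bumpP (\<Union>K) x b" using \<open>k \<in> K\<close> unfolding bumpP_def by blast
  then show ?case by blast
next
  case (Basis s)
  then obtain f U where s: "s = f -` U" and f: "f \<in> L" and U: "open U" by blast
  with Basis have "f x \<in> U" by auto
  then obtain r where r: "r > 0" "ball (f x) r \<subseteq> U" using U open_contains_ball by blast
  define b where "b = (\<lambda>y. max (1 - \<bar>f y - f x\<bar> / r) 0)"
  have "(\<lambda>y. 1 + (-1/r) * \<bar>f y - f x\<bar>) \<in> L"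
    using L_add[OF L_const L_smul[OF L_abs[OF L_diff[OF f L_const]]], of 1 "-1/r" "f x"] by simp
  then have "(\<lambda>y. max (1 + (-1/r) * \<bar>f y - f x\<bar>) 0) \<in> L" by (rule L_pos)
  moreover have "(\<lambda>y. max (1 + (-1/r) * \<bar>f y - f x\<bar>) 0) = b"
    unfolding b_def by (auto simp: fun_eq_iff)
  ultimately have bL: "b \<in> L" by simp
  have "b y = 0" if "y \<notin> s" for y
  proof -
    have "f y \<notin> ball (f x) r" using that r s by auto
    then have "\<bar>f y - f x\<bar> \<ge> r" by (simp add: dist_real_def abs_minus_commute)
    then have "\<bar>f y - f x\<bar> / r \<ge> 1" using r by simp
    then show ?thesis unfolding b_def by simp
  qed
  moreover have "0 \<le> b y \<and> b y \<le> 1" for y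
    unfolding b_def using r by auto
  ultimately have "bumpP s x b" unfolding bumpP_def using bL by (simp add: b_def)
  then show ?case by blast
qed

lemma bump:
  assumes "open W" "x \<in> W"
  shows "\<exists>b. bumpP W x b"
proof -
  have "openin (topology_generated_by {f -` U | f U. f \<in> L \<and> open U}) W"
    using assms L_gen by simp
  then show ?thesis using bump_gen assms openin_topology_generated_by_iff by blast
qed

lemma L_sub_dom: "f \<in> L \<Longrightarrow> f \<in> L1_dom L c"
proof -
  assume f: "f \<in> L"
  have "cap_ext L c f < \<infinity>" using cap_ext_L[OF f]
    by (rule le_less_trans) simp
  moreover have "\<exists>f'\<in>L. cap_ext L c (\<lambda>x. f x - f' x) < ereal e" if "e > 0" for e
  proof -
    have "cap_ext L c (\<lambda>x. f x - f x) \<le> ereal (c (\<lambda>x. \<bar>(\<lambda>x. f x - f x) x\<bar>))"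
      by (rule cap_ext_L) (rule L_diff[OF f f])
    then have "cap_ext L c (\<lambda>x. f x - f x) \<le> ereal 0" using c_zero by simp
    also have "ereal 0 < ereal e" using that by simp
    finally have "cap_ext L c (\<lambda>x. f x - f x) < ereal e" .
    then show ?thesis by (rule rev_bexI[OF f])
  qed
  ultimately show ?thesis unfolding L1_dom_def mem_Collect_eq by blast
qed

lemma diff_dom:
  assumes g: "g \<in> L1_dom L c" and f: "f \<in> L" and fin: "cap_ext L c (\<lambda>x. g x - f x) < \<infinity>"
  shows "(\<lambda>x. g x - f x) \<in> L1_dom L c"
proof -
  have A: "\<exists>f'\<in>L. cap_ext L c (\<lambda>x. g x - f x - f' x) < ereal e" if "e > 0" for e
  proof -
    obtain f'' where f'': "f'' \<in> L" "cap_ext L c (\<lambda>x. g x - f'' x) < ereal e"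
      using g \<open>e > 0\<close> unfolding L1_dom_def by blast
    have eq: "(\<lambda>x. g x - f x - (f'' x - f x)) = (\<lambda>x. g x - f'' x)" by auto
    have "cap_ext L c (\<lambda>x. g x - f x - (f'' x - f x)) < ereal e" using f''(2) by (simp only: eq)
    then show ?thesis by (rule rev_bexI[OF L_diff[OF f''(1) f]])
  qed
  show ?thesis unfolding L1_dom_def mem_Collect_eq
    by (intro conjI allI impI fin A) (simp_all)
qed

lemma ev_L: "(\<And>n. gs n \<in> L) \<Longrightarrow> ev gs e \<in> L"
  by (induction e) (simp_all add: L_add L_smul L_min L_const)

definition good :: "(nat \<Rightarrow> 'a \<Rightarrow> real) \<Rightarrow> bool" where
  "good gs \<longleftrightarrow> (\<forall>n. gs n \<in> L) \<and> (\<forall>W x. open W \<and> x \<in> W \<longrightarrow>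
     (\<exists>n. (\<forall>y. 0 \<le> gs n y \<and> gs n y \<le> 1) \<and> gs n x > 1/2 \<and> (\<forall>y. y \<notin> W \<longrightarrow> gs n y = 0)))"

lemma ex_good: "\<exists>gs. good gs"
proof -
  obtain B :: "'a set set" where B: "countable B" "topological_basis B"
    using ex_countable_basis by blast
  define P where "P = (\<lambda>Oa Ob b. b \<in> L \<and> (\<forall>y. 0 \<le> b y \<and> b y \<le> 1) \<and> (\<forall>y. y \<notin> Oa \<longrightarrow> b y = 0)
      \<and> (\<forall>y\<in>Ob. b y > 1/2))"
  define Q where "Q = {p \<in> B \<times> B. \<exists>b. P (fst p) (snd p) b}"
  define G where "G = insert (\<lambda>y. 0) ((\<lambda>p. SOME b. P (fst p) (snd p) b) ` Q)"
  have "Q \<subseteq> B \<times> B" unfolding Q_def by blast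
  then have cQ: "countable Q" by (rule countable_subset) (intro countable_SIGMA B(1))
  then have cG: "countable G" unfolding G_def by simp
  have GL: "G \<subseteq> L"
  proof
    fix b assume "b \<in> G"
    then consider "b = (\<lambda>y. 0)" | p where "p \<in> Q" "b = (SOME b. P (fst p) (snd p) b)"
      unfolding G_def by blast
    then show "b \<in> L"
    proof cases
      case 1 then show ?thesis using L_const by simp
    next
      case 2
      then have "\<exists>b. P (fst p) (snd p) b" unfolding Q_def by blast
      from someI_ex[OF this] have "P (fst p) (snd p) b" using 2(2) by simp
      then show ?thesis unfolding P_def by blast
    qed
  qed
  define gs where "gs = from_nat_into G"
  have gsG: "gs n \<in> G" for n unfolding gs_def by (rule from_nat_into) (simp add: G_def)
  have H: "(\<forall>W x. open W \<and> x \<in> W \<longrightarrow>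
     (\<exists>n. (\<forall>y. 0 \<le> gs n y \<and> gs n y \<le> 1) \<and> gs n x > 1/2 \<and> (\<forall>y. y \<notin> W \<longrightarrow> gs n y = 0)))"
  proof (intro allI impI)
    fix W :: "'a set" and x :: 'a assume Wx: "open W \<and> x \<in> W"
    then obtain Oa where Oa: "Oa \<in> B" "x \<in> Oa" "Oa \<subseteq> W" using topological_basisE[OF B(2), of W x] by blast
    then have "open Oa" using B(2) topological_basis_open by blast
    then obtain b where b: "bumpP Oa x b" using bump Oa by blast
    have "open {y. b y > 1/2}"
    proof -
      have "continuous_on UNIV b" using b L_cont unfolding bumpP_def by blast
      then have "open (b -` {1/2<..})" using continuous_on_open_vimage[of UNIV b] by auto
      then show ?thesis by (simp add: vimage_def)
    qed
    moreover have "x \<in> {y. b y > 1/2}" using b unfolding bumpP_def by simp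
    ultimately obtain Ob where Ob: "Ob \<in> B" "x \<in> Ob" "Ob \<subseteq> {y. b y > 1/2}"
      using topological_basisE[OF B(2), of "{y. b y > 1/2}" x] by blast
    have "P Oa Ob b" using b Ob unfolding P_def bumpP_def by auto
    then have pQ: "(Oa, Ob) \<in> Q" unfolding Q_def using Oa Ob by auto
    define b' where "b' = (SOME b. P Oa Ob b)"
    have Pb': "P Oa Ob b'" unfolding b'_def using \<open>P Oa Ob b\<close> by (rule someI[where P="P Oa Ob"])
    have "b' \<in> G" unfolding G_def b'_def
      by (rule insertI2, rule image_eqI[of _ _ "(Oa,Ob)"]) (use pQ in auto)
    then have gsb: "gs (to_nat_on G b') = b'" unfolding gs_def using cG by simp
    have P1: "\<forall>y. 0 \<le> b' y \<and> b' y \<le> 1" and P2: "\<forall>y. y \<notin> Oa \<longrightarrow> b' y = 0"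
      and P3: "\<forall>y\<in>Ob. b' y > 1/2" using Pb' unfolding P_def by blast+
    have "b' x > 1/2" using P3 Ob(2) by blast
    moreover have "\<forall>y. y \<notin> W \<longrightarrow> b' y = 0" using P2 Oa(3) by blast
    ultimately show "\<exists>n. (\<forall>y. 0 \<le> gs n y \<and> gs n y \<le> 1) \<and> gs n x > 1/2 \<and> (\<forall>y. y \<notin> W \<longrightarrow> gs n y = 0)"
      using P1 gsb by metis
  qed
  have "\<forall>n. gs n \<in> L" using gsG GL by blast
  then have "good gs" unfolding good_def using H by (intro conjI)
  then show ?thesis by blast
qed

definition gs0 where "gs0 = (SOME gs. good gs)"

lemma good_gs0: "good gs0"
  unfolding gs0_def by (rule someI_ex[OF ex_good])

lemma gs0_L: "gs0 n \<in> L"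
proof -
  have "\<forall>n. gs0 n \<in> L" using good_gs0 unfolding good_def by (rule conjunct1)
  then show ?thesis by (rule spec)
qed

lemma D_L: "ev gs0 e \<in> L"
  by (rule ev_L[OF gs0_L])

lemma D_bump:
  assumes "open W" "x \<in> W"
  shows "\<exists>e. (\<forall>y. 0 \<le> ev gs0 e y \<and> ev gs0 e y \<le> 1) \<and> ev gs0 e x = 1 \<and> (\<forall>y. y \<notin> W \<longrightarrow> ev gs0 e y = 0)"
proof -
  have "\<forall>W x. open W \<and> x \<in> W \<longrightarrow>
     (\<exists>n. (\<forall>y. 0 \<le> gs0 n y \<and> gs0 n y \<le> 1) \<and> gs0 n x > 1/2 \<and> (\<forall>y. y \<notin> W \<longrightarrow> gs0 n y = 0))"
    using good_gs0 unfolding good_def by (rule conjunct2)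
  from this[rule_format, OF conjI[OF assms]]
  obtain n where n: "\<forall>y. 0 \<le> gs0 n y \<and> gs0 n y \<le> 1" "gs0 n x > 1/2" "\<forall>y. y \<notin> W \<longrightarrow> gs0 n y = 0"
    by blast
  let ?e = "Mn (Smul 2 (Gen n)) (Cst 1)"
  have ev: "ev gs0 ?e y = min (2 * gs0 n y) 1" for y by simp
  have "0 \<le> ev gs0 ?e y \<and> ev gs0 ?e y \<le> 1" for y unfolding ev using n(1) by simp
  moreover have "ev gs0 ?e x = 1" unfolding ev using n(2) by simp
  moreover have "ev gs0 ?e y = 0" if "y \<notin> W" for y unfolding ev using n(3) that by simp
  ultimately show ?thesis by blast
qed

lemma D_above:
  assumes f: "f \<in> L" and eps: "\<epsilon> > 0"
  shows "\<exists>e. (\<forall>y. f y \<le> ev gs0 e y) \<and> ev gs0 e x < f x + \<epsilon>"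
proof -
  obtain Bd where Bd: "\<forall>y. \<bar>f y\<bar> \<le> Bd" using L_bdd[OF f] unfolding bounded_iff by auto
  obtain q where q: "q \<in> \<rat>" "f x < q" "q < f x + \<epsilon>" using Rats_dense_in_real[of "f x" "f x + \<epsilon>"] eps by auto
  obtain q' where q': "q = real_of_rat q'" using q(1) Rats_cases by blast
  define k :: nat where "k = nat \<lceil>max Bd q\<rceil> + 1"
  have kB: "real k \<ge> Bd" "real k \<ge> q" unfolding k_def by linarith+
  define W where "W = {y. f y < q}"
  have "open W"
  proof -
    have "open (f -` {..<q})" using continuous_on_open_vimage[of UNIV f] L_cont[OF f] by auto
    then show ?thesis unfolding W_def by (simp add: vimage_def)
  qed
  moreover have "x \<in> W" unfolding W_def using q by simp
  ultimately obtain e where e: "\<forall>y. 0 \<le> ev gs0 e y \<and> ev gs0 e y \<le> 1" "ev gs0 e x = 1"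
      "\<forall>y. y \<notin> W \<longrightarrow> ev gs0 e y = 0"
    using D_bump by blast
  let ?d = "Add (Cst (of_nat k)) (Smul (q' - of_nat k) e)"
  have evd: "ev gs0 ?d y = real k + (q - real k) * ev gs0 e y" for y
    by (simp add: q' of_rat_diff)
  have "f y \<le> ev gs0 ?d y" for y
  proof (cases "y \<in> W")
    case True
    have "(q - real k) * ev gs0 e y \<ge> (q - real k) * 1"
      using e(1) kB by (intro mult_left_mono_neg) auto
    then show ?thesis using True unfolding evd W_def by simp
  next
    case False
    then have "ev gs0 e y = 0" using e(3) by blast
    moreover have "f y \<le> Bd" using Bd abs_ge_self order_trans by blast
    ultimately show ?thesis using kB unfolding evd by simp
  qed
  moreover have "ev gs0 ?d x < f x + \<epsilon>" unfolding evd using e(2) q by simp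
  ultimately show ?thesis by blast
qed

lemma D_seq:
  assumes f: "f \<in> L"
  shows "\<exists>r::nat \<Rightarrow> expr. (\<forall>n y. f y \<le> ev gs0 (r n) y) \<and> (\<forall>n y. ev gs0 (r (Suc n)) y \<le> ev gs0 (r n) y)
     \<and> (\<forall>y. (\<lambda>n. ev gs0 (r n) y) \<longlonglongrightarrow> f y)"
proof -
  define S where "S = {e. \<forall>y. f y \<le> ev gs0 e y}"
  have cS: "countable S" by simp
  have Sne: "S \<noteq> {}" using D_above[OF f, of 1] unfolding S_def by auto
  define s where "s = from_nat_into S"
  have sS: "s n \<in> S" for n unfolding s_def using Sne by (rule from_nat_into)
  define r where "r = rec_nat (s 0) (\<lambda>n rn. Mn rn (s (Suc n)))"
  have r0: "r 0 = s 0" and rS: "r (Suc n) = Mn (r n) (s (Suc n))" for n unfolding r_def by simp_all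
  have above: "f y \<le> ev gs0 (r n) y" for n y
    using sS by (induction n) (auto simp: r0 rS S_def)
  have dec: "ev gs0 (r (Suc n)) y \<le> ev gs0 (r n) y" for n y by (simp add: rS)
  have le_s: "ev gs0 (r n) y \<le> ev gs0 (s k) y" if "k \<le> n" for n k y
    using that
  proof (induction n)
    case 0 then show ?case by (simp add: r0)
  next
    case (Suc n)
    then show ?case by (cases "k = Suc n") (auto simp: rS le_Suc_eq min_le_iff_disj)
  qed
  have "(\<lambda>n. ev gs0 (r n) y) \<longlonglongrightarrow> f y" for y
  proof (rule LIMSEQ_I)
    fix \<epsilon> :: real assume "\<epsilon> > 0"
    then obtain e where e: "e \<in> S" "ev gs0 e y < f y + \<epsilon>" using D_above[OF f] unfolding S_def by blast
    define k where "k = to_nat_on S e"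
    have sk: "s k = e" unfolding s_def k_def using cS e(1) by simp
    have "norm (ev gs0 (r n) y - f y) < \<epsilon>" if "n \<ge> k" for n
      using le_s[OF that, of y] above[of y n] sk e(2) by simp
    then show "\<exists>no. \<forall>n\<ge>no. norm (ev gs0 (r n) y - f y) < \<epsilon>" by blast
  qed
  then show ?thesis using above dec by blast
qed

lemma D_approx:
  assumes f: "f \<in> L" and eps: "\<epsilon> > 0"
  shows "\<exists>e. (\<forall>y. f y \<le> ev gs0 e y) \<and> c (\<lambda>y. ev gs0 e y - f y) < \<epsilon>"
proof -
  obtain r where r: "\<forall>n y. f y \<le> ev gs0 (r n) y" "\<forall>n y. ev gs0 (r (Suc n)) y \<le> ev gs0 (r n) y"
     "\<forall>y. (\<lambda>n. ev gs0 (r n) y) \<longlonglongrightarrow> f y"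
    using D_seq[OF f] by blast
  define F where "F = (\<lambda>n y. ev gs0 (r n) y - f y)"
  have FL: "F n \<in> L" for n unfolding F_def by (rule L_diff[OF D_L f])
  have "(\<lambda>n. F n y) \<longlonglongrightarrow> 0" for y
    unfolding F_def using r(3) by (simp add: LIM_zero)
  then have "(INF n. c (F n)) = 0" using c_daniell[of F] FL r(2) unfolding F_def by auto
  moreover have "bdd_below (range (\<lambda>n. c (F n)))" by (rule bdd_belowI[where m=0]) (use c_nonneg FL in auto)
  ultimately obtain n where "c (F n) < \<epsilon>" using cINF_less_iff[of UNIV "\<lambda>n. c (F n)" \<epsilon>] eps by auto
  then show ?thesis using r(1) unfolding F_def by blast
qed


lemma small0:
  fixes x :: real
  assumes "\<And>\<epsilon>. \<epsilon> > 0 \<Longrightarrow> x \<le> 2 * \<epsilon>"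
  shows "x \<le> 0"
proof (rule ccontr)
  assume "\<not> x \<le> 0"
  then have "x / 4 > 0" by simp
  from assms[OF this] show False using \<open>\<not> x \<le> 0\<close> by linarith
qed

lemma eval_cont: "continuous_map (weak_star L c) euclideanreal (\<lambda>\<phi>. \<phi> Y)"
proof (cases "Y \<in> L1 L c")
  case True
  then show ?thesis unfolding weak_star_def by (rule continuous_map_product_projection)
next
  case False
  have "continuous_map (weak_star L c) euclideanreal (\<lambda>\<phi>. undefined)"
    by (rule continuous_map_const[THEN iffD2]) simp
  then show ?thesis
  proof (rule continuous_map_eq)
    fix \<phi> assume "\<phi> \<in> topspace (weak_star L c)"
    then have "\<phi> \<in> extensional (L1 L c)" unfolding weak_star_def topspace_product_topology
      by (simp add: PiE_def)
    from extensional_arb[OF this False] show "undefined = \<phi> Y" by (rule sym)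
  qed
qed

lemma class_in: "g \<in> L1_dom L c \<Longrightarrow> L1_class L c g \<in> L1 L c"
  unfolding L1_def L1_class_def by (rule quotientI)

lemma L1_elem: assumes "X \<in> L1 L c" obtains g where "g \<in> L1_dom L c" "X = L1_class L c g"
  using assms unfolding L1_def L1_class_def quotient_def by blast

lemma K_unf: assumes "\<phi> \<in> Kplus L c" shows "\<phi> \<in> extensional (L1 L c) \<and>
     (\<forall>g\<in>L1_dom L c. \<forall>h\<in>L1_dom L c. \<forall>a b::real.
        \<phi> (L1_class L c (\<lambda>x. a * g x + b * h x)) = a * \<phi> (L1_class L c g) + b * \<phi> (L1_class L c h)) \<and>
     (\<forall>g\<in>L1_dom L c. ereal \<bar>\<phi> (L1_class L c g)\<bar> \<le> cap_ext L c g) \<and>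
     (\<forall>X\<in>L1 L c. L1_nonneg L c X \<longrightarrow> 0 \<le> \<phi> X)"
  using assms unfolding Kplus_def by (rule CollectD)

lemma K_lin: assumes "\<phi> \<in> Kplus L c" "g \<in> L1_dom L c" "h \<in> L1_dom L c"
  shows "\<phi> (L1_class L c (\<lambda>x. a * g x + b * h x)) = a * \<phi> (L1_class L c g) + b * \<phi> (L1_class L c h)"
proof -
  have "\<forall>g\<in>L1_dom L c. \<forall>h\<in>L1_dom L c. \<forall>a b::real.
        \<phi> (L1_class L c (\<lambda>x. a * g x + b * h x)) = a * \<phi> (L1_class L c g) + b * \<phi> (L1_class L c h)"
    by (rule K_unf[OF assms(1), THEN conjunct2, THEN conjunct1])
  from this[rule_format, OF assms(2) assms(3)] show ?thesis .
qed

lemma K_bd: assumes "\<phi> \<in> Kplus L c" "g \<in> L1_dom L c"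
  shows "ereal \<bar>\<phi> (L1_class L c g)\<bar> \<le> cap_ext L c g"
proof -
  have "\<forall>g\<in>L1_dom L c. ereal \<bar>\<phi> (L1_class L c g)\<bar> \<le> cap_ext L c g"
    by (rule K_unf[OF assms(1), THEN conjunct2, THEN conjunct2, THEN conjunct1])
  from this[rule_format, OF assms(2)] show ?thesis .
qed

lemma K_pos: assumes "\<phi> \<in> Kplus L c" "X \<in> L1 L c" "L1_nonneg L c X"
  shows "0 \<le> \<phi> X"
proof -
  have "\<forall>X\<in>L1 L c. L1_nonneg L c X \<longrightarrow> 0 \<le> \<phi> X"
    by (rule K_unf[OF assms(1), THEN conjunct2, THEN conjunct2, THEN conjunct2])
  from this[rule_format, OF assms(2) assms(3)] show ?thesis .
qed

lemma K_ext: "\<phi> \<in> Kplus L c \<Longrightarrow> \<phi> \<in> extensional (L1 L c)"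
  by (rule K_unf[THEN conjunct1])

lemma K_top: "Kplus L c \<subseteq> topspace (weak_star L c)"
  unfolding weak_star_def topspace_product_topology by (auto simp: PiE_def Pi_def dest: K_ext)

lemma lip:
  assumes \<phi>: "\<phi> \<in> Kplus L c" and g: "g \<in> L1_dom L c" and f: "f \<in> L"
    and fin: "cap_ext L c (\<lambda>x. g x - f x) < \<infinity>"
  shows "ereal \<bar>\<phi> (L1_class L c g) - \<phi> (L1_class L c f)\<bar> \<le> cap_ext L c (\<lambda>x. g x - f x)"
proof -
  have "\<phi> (L1_class L c (\<lambda>x. 1 * g x + (-1) * f x)) = 1 * \<phi> (L1_class L c g) + (-1) * \<phi> (L1_class L c f)"
    by (rule K_lin[OF \<phi> g L_sub_dom[OF f]])
  moreover have "(\<lambda>x. 1 * g x + (-1) * f x) = (\<lambda>x. g x - f x)" by (simp add: fun_eq_iff)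
  ultimately have "\<phi> (L1_class L c (\<lambda>x. g x - f x)) = \<phi> (L1_class L c g) - \<phi> (L1_class L c f)" by simp
  moreover have "ereal \<bar>\<phi> (L1_class L c (\<lambda>x. g x - f x))\<bar> \<le> cap_ext L c (\<lambda>x. g x - f x)"
    by (rule K_bd[OF \<phi> diff_dom[OF g f fin]])
  ultimately show ?thesis by simp
qed

lemma K_sep_L:
  assumes \<phi>: "\<phi> \<in> Kplus L c" and \<psi>: "\<psi> \<in> Kplus L c"
    and agree: "\<And>e. \<phi> (L1_class L c (ev gs0 e)) = \<psi> (L1_class L c (ev gs0 e))"
    and f: "f \<in> L"
  shows "\<phi> (L1_class L c f) = \<psi> (L1_class L c f)"
proof -
  have "\<bar>\<phi> (L1_class L c f) - \<psi> (L1_class L c f)\<bar> \<le> 2 * \<epsilon>" if eps: "\<epsilon> > 0" for \<epsilon>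
  proof -
    obtain e where e: "\<forall>y. f y \<le> ev gs0 e y" "c (\<lambda>y. ev gs0 e y - f y) < \<epsilon>"
      using D_approx[OF f eps] by blast
    let ?d = "ev gs0 e"
    have dL: "?d \<in> L" by (rule D_L)
    have "cap_ext L c (\<lambda>x. ?d x - f x) \<le> ereal (c (\<lambda>x. \<bar>?d x - f x\<bar>))"
      by (rule cap_ext_L[OF L_diff[OF dL f]])
    also have "(\<lambda>x. \<bar>?d x - f x\<bar>) = (\<lambda>x. ?d x - f x)" using e(1) by (simp add: fun_eq_iff)
    finally have ce: "cap_ext L c (\<lambda>x. ?d x - f x) \<le> ereal (c (\<lambda>x. ?d x - f x))" .
    then have fin: "cap_ext L c (\<lambda>x. ?d x - f x) < \<infinity>" by (rule le_less_trans) simp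
    have "ereal \<bar>\<phi> (L1_class L c ?d) - \<phi> (L1_class L c f)\<bar> \<le> ereal (c (\<lambda>x. ?d x - f x))"
      using lip[OF \<phi> L_sub_dom[OF dL] f fin] ce by (rule order_trans)
    then have 1: "\<bar>\<phi> (L1_class L c ?d) - \<phi> (L1_class L c f)\<bar> \<le> \<epsilon>" using e(2) by simp
    have "ereal \<bar>\<psi> (L1_class L c ?d) - \<psi> (L1_class L c f)\<bar> \<le> ereal (c (\<lambda>x. ?d x - f x))"
      using lip[OF \<psi> L_sub_dom[OF dL] f fin] ce by (rule order_trans)
    then have 2: "\<bar>\<psi> (L1_class L c ?d) - \<psi> (L1_class L c f)\<bar> \<le> \<epsilon>" using e(2) by simp
    show ?thesis using 1 2 agree[of e] by linarith
  qed
  then have "\<bar>\<phi> (L1_class L c f) - \<psi> (L1_class L c f)\<bar> \<le> 0"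
    by (rule small0)
  then show ?thesis by simp
qed

lemma K_sep:
  assumes \<phi>: "\<phi> \<in> Kplus L c" and \<psi>: "\<psi> \<in> Kplus L c"
    and agree: "\<And>e. \<phi> (L1_class L c (ev gs0 e)) = \<psi> (L1_class L c (ev gs0 e))"
  shows "\<phi> = \<psi>"
proof
  fix X
  show "\<phi> X = \<psi> X"
  proof (cases "X \<in> L1 L c")
    case False
    have e1: "\<phi> X = undefined" by (rule extensional_arb[OF K_ext[OF \<phi>] False])
    have e2: "\<psi> X = undefined" by (rule extensional_arb[OF K_ext[OF \<psi>] False])
    show ?thesis by (simp only: e1 e2)
  next
    case True
    then obtain g where g: "g \<in> L1_dom L c" "X = L1_class L c g" by (rule L1_elem)
    have "\<bar>\<phi> X - \<psi> X\<bar> \<le> 2 * \<epsilon>" if eps: "\<epsilon> > 0" for \<epsilon>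
    proof -
      obtain f where f: "f \<in> L" "cap_ext L c (\<lambda>x. g x - f x) < ereal \<epsilon>"
        using g(1) eps unfolding L1_dom_def by blast
      have fin: "cap_ext L c (\<lambda>x. g x - f x) < \<infinity>" using f(2) by (rule less_trans) simp
      have "ereal \<bar>\<phi> X - \<phi> (L1_class L c f)\<bar> < ereal \<epsilon>"
        unfolding g(2) using lip[OF \<phi> g(1) f(1) fin] f(2) by (rule le_less_trans)
      then have 1: "\<bar>\<phi> X - \<phi> (L1_class L c f)\<bar> \<le> \<epsilon>" by simp
      have "ereal \<bar>\<psi> X - \<psi> (L1_class L c f)\<bar> < ereal \<epsilon>"
        unfolding g(2) using lip[OF \<psi> g(1) f(1) fin] f(2) by (rule le_less_trans)
      then have 2: "\<bar>\<psi> X - \<psi> (L1_class L c f)\<bar> \<le> \<epsilon>" by simp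
      show ?thesis using 1 2 K_sep_L[OF \<phi> \<psi> agree f(1)] by linarith
    qed
    then have "\<bar>\<phi> X - \<psi> X\<bar> \<le> 0"
      by (rule small0)
    then show ?thesis by simp
  qed
qed

lemma closedin_all:
  assumes "\<And>i. i \<in> A \<Longrightarrow> closedin X {x \<in> topspace X. P i x}"
  shows "closedin X {x \<in> topspace X. \<forall>i\<in>A. P i x}"
proof (cases "A = {}")
  case True
  then show ?thesis by simp
next
  case False
  have eq: "{x \<in> topspace X. \<forall>i\<in>A. P i x} = \<Inter>((\<lambda>i. {x \<in> topspace X. P i x}) ` A)"
    using False by auto
  show ?thesis unfolding eq using False assms by (intro closedin_Inter) auto
qed

lemma closed_ereal_abs_le: "closed {t::real. ereal \<bar>t\<bar> \<le> C}"
proof (cases C)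
  case (real r)
  have "{t::real. ereal \<bar>t\<bar> \<le> C} = {t. \<bar>t\<bar> \<le> r}" using real by simp
  moreover have "closed {t::real. \<bar>t\<bar> \<le> r}" by (intro closed_Collect_le continuous_intros)
  ultimately show ?thesis by simp
next
  case PInf
  then show ?thesis by simp
next
  case MInf
  then show ?thesis by simp
qed

lemma K_closed: "closedin (weak_star L c) (Kplus L c)"
proof -
  let ?W = "weak_star L c"
  define T where "T = L1_dom L c \<times> L1_dom L c \<times> (UNIV :: real set) \<times> (UNIV :: real set)"
  define lin where "lin = (\<lambda>(t::('a \<Rightarrow> real) \<times> ('a \<Rightarrow> real) \<times> real \<times> real) (\<phi>::('a \<Rightarrow> real) set \<Rightarrow> real).
     case t of (g, h, a, b) \<Rightarrow>
     \<phi> (L1_class L c (\<lambda>x. a * g x + b * h x)) = a * \<phi> (L1_class L c g) + b * \<phi> (L1_class L c h))"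
  have c1: "closedin ?W {\<phi> \<in> topspace ?W. \<forall>t\<in>T. lin t \<phi>}"
  proof (rule closedin_all)
    fix t assume "t \<in> T"
    obtain g h a b where t: "t = (g, h, a, b)" by (cases t) auto
    have "closedin ?W {\<phi> \<in> topspace ?W. \<phi> (L1_class L c (\<lambda>x. a * g x + b * h x)) =
           a * \<phi> (L1_class L c g) + b * \<phi> (L1_class L c h)}"
      by (intro closedin_continuous_maps_eq[where Y=euclideanreal] Hausdorff_space_euclidean eval_cont
          continuous_map_add continuous_map_real_mult_left)
    then show "closedin ?W {\<phi> \<in> topspace ?W. lin t \<phi>}" unfolding lin_def t by simp
  qed
  have c2: "closedin ?W {\<phi> \<in> topspace ?W. \<forall>g\<in>L1_dom L c. ereal \<bar>\<phi> (L1_class L c g)\<bar> \<le> cap_ext L c g}"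
  proof (rule closedin_all)
    fix g
    have "closedin ?W {\<phi> \<in> topspace ?W. \<phi> (L1_class L c g) \<in> {t. ereal \<bar>t\<bar> \<le> cap_ext L c g}}"
      by (rule closedin_continuous_map_preimage[OF eval_cont]) (simp add: closed_ereal_abs_le)
    then show "closedin ?W {\<phi> \<in> topspace ?W. ereal \<bar>\<phi> (L1_class L c g)\<bar> \<le> cap_ext L c g}" by simp
  qed
  have c3: "closedin ?W {\<phi> \<in> topspace ?W. \<forall>X\<in>L1 L c. L1_nonneg L c X \<longrightarrow> 0 \<le> \<phi> X}"
  proof (rule closedin_all)
    fix X
    show "closedin ?W {\<phi> \<in> topspace ?W. L1_nonneg L c X \<longrightarrow> 0 \<le> \<phi> X}"
    proof (cases "L1_nonneg L c X")
      case True
      have "closedin ?W {\<phi> \<in> topspace ?W. \<phi> X \<in> {0..}}"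
        by (rule closedin_continuous_map_preimage[OF eval_cont]) simp
      then show ?thesis using True by simp
    next
      case False
      then show ?thesis by simp
    qed
  qed
  have eq: "Kplus L c = {\<phi> \<in> topspace ?W. \<forall>t\<in>T. lin t \<phi>} \<inter>
     {\<phi> \<in> topspace ?W. \<forall>g\<in>L1_dom L c. ereal \<bar>\<phi> (L1_class L c g)\<bar> \<le> cap_ext L c g} \<inter>
     {\<phi> \<in> topspace ?W. \<forall>X\<in>L1 L c. L1_nonneg L c X \<longrightarrow> 0 \<le> \<phi> X}" (is "_ = ?R")
  proof
    show "Kplus L c \<subseteq> ?R"
    proof
      fix \<phi> assume \<phi>: "\<phi> \<in> Kplus L c"
      have "\<phi> \<in> topspace ?W" using \<phi> K_top by blast
      moreover have "\<forall>t\<in>T. lin t \<phi>" unfolding T_def lin_def using K_lin[OF \<phi>] by auto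
      moreover have "\<forall>g\<in>L1_dom L c. ereal \<bar>\<phi> (L1_class L c g)\<bar> \<le> cap_ext L c g"
        using K_bd[OF \<phi>] by blast
      moreover have "\<forall>X\<in>L1 L c. L1_nonneg L c X \<longrightarrow> 0 \<le> \<phi> X" using K_pos[OF \<phi>] by blast
      ultimately show "\<phi> \<in> ?R" by blast
    qed
  next
    show "?R \<subseteq> Kplus L c"
    proof
      fix \<phi> assume \<phi>: "\<phi> \<in> ?R"
      then have "\<phi> \<in> topspace ?W" by blast
      then have ext: "\<phi> \<in> extensional (L1 L c)" unfolding weak_star_def topspace_product_topology
        by (simp add: PiE_def)
      have "\<forall>t\<in>T. lin t \<phi>" using \<phi> by blast
      then have lin': "\<forall>g\<in>L1_dom L c. \<forall>h\<in>L1_dom L c. \<forall>a b::real.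
        \<phi> (L1_class L c (\<lambda>x. a * g x + b * h x)) = a * \<phi> (L1_class L c g) + b * \<phi> (L1_class L c h)"
        unfolding T_def lin_def by auto
      show "\<phi> \<in> Kplus L c" unfolding Kplus_def mem_Collect_eq using ext lin' \<phi> by blast
    qed
  qed
  show ?thesis unfolding eq using c1 c2 c3 by (intro closedin_Int)
qed

lemma ereal_le_real: "ereal a \<le> C \<Longrightarrow> C < \<infinity> \<Longrightarrow> a \<le> real_of_ereal C"
  by (cases C) auto

definition bd :: "('a \<Rightarrow> real) set \<Rightarrow> real" where
  "bd X = real_of_ereal (cap_ext L c (SOME g. g \<in> L1_dom L c \<and> X = L1_class L c g))"

lemma K_box: "Kplus L c \<subseteq> (\<Pi>\<^sub>E X\<in>L1 L c. {-bd X..bd X})"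
proof
  fix \<phi> assume \<phi>: "\<phi> \<in> Kplus L c"
  have "\<phi> X \<in> {-bd X..bd X}" if X: "X \<in> L1 L c" for X
  proof -
    obtain g where "g \<in> L1_dom L c" "X = L1_class L c g" using X by (rule L1_elem)
    then have "\<exists>g. g \<in> L1_dom L c \<and> X = L1_class L c g" by blast
    then have g0: "(SOME g. g \<in> L1_dom L c \<and> X = L1_class L c g) \<in> L1_dom L c \<and>
                   X = L1_class L c (SOME g. g \<in> L1_dom L c \<and> X = L1_class L c g)"
      by (rule someI_ex)
    define g0 where "g0 = (SOME g. g \<in> L1_dom L c \<and> X = L1_class L c g)"
    have g0d: "g0 \<in> L1_dom L c" and Xg0: "X = L1_class L c g0" using g0 unfolding g0_def by auto
    have "ereal \<bar>\<phi> X\<bar> \<le> cap_ext L c g0" unfolding Xg0 by (rule K_bd[OF \<phi> g0d])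
    moreover have "cap_ext L c g0 < \<infinity>" using g0d unfolding L1_dom_def by blast
    ultimately have "\<bar>\<phi> X\<bar> \<le> bd X" unfolding bd_def g0_def[symmetric] by (rule ereal_le_real)
    then show ?thesis by (simp add: abs_le_iff)
  qed
  then show "\<phi> \<in> (\<Pi>\<^sub>E X\<in>L1 L c. {-bd X..bd X})" using K_ext[OF \<phi>] by (simp add: PiE_def Pi_def)
qed

lemma K_compact: "compactin (weak_star L c) (Kplus L c)"
proof (rule closed_compactin[OF _ K_box K_closed])
  show "compactin (weak_star L c) (\<Pi>\<^sub>E X\<in>L1 L c. {-bd X..bd X})"
    unfolding weak_star_def by (subst compactin_PiE) simp
qed

lemma K_metrizable: "metrizable_space (subtopology (weak_star L c) (Kplus L c))"
proof -
  let ?W = "weak_star L c" and ?K = "Kplus L c"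
  define \<Phi> where "\<Phi> = (\<lambda>\<phi>::('a \<Rightarrow> real) set \<Rightarrow> real. (\<lambda>e::expr. \<phi> (L1_class L c (ev gs0 e))))"
  have top: "topspace (subtopology ?W ?K) = ?K" using K_top by auto
  have cont: "continuous_map (subtopology ?W ?K) euclidean \<Phi>"
    unfolding euclidean_product_topology[symmetric] continuous_map_componentwise_UNIV \<Phi>_def
    by (intro allI continuous_map_from_subtopology eval_cont)
  have cs: "compact_space (subtopology ?W ?K)" by (rule compact_space_subtopology[OF K_compact])
  have cm: "closed_map (subtopology ?W ?K) euclidean \<Phi>"
    by (rule continuous_imp_closed_map_gen[OF cs Hausdorff_imp_kc_space[OF Hausdorff_space_euclidean] cont])
  have inj: "inj_on \<Phi> (topspace (subtopology ?W ?K))"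
    unfolding top
  proof (rule inj_onI)
    fix \<phi> \<psi> assume "\<phi> \<in> ?K" "\<psi> \<in> ?K" "\<Phi> \<phi> = \<Phi> \<psi>"
    then show "\<phi> = \<psi>" by (intro K_sep) (auto simp: \<Phi>_def fun_eq_iff)
  qed
  have "embedding_map (subtopology ?W ?K) euclidean \<Phi>"
    by (rule injective_closed_imp_embedding_map[OF cont cm inj])
  then have "subtopology ?W ?K homeomorphic_space subtopology euclidean (\<Phi> ` topspace (subtopology ?W ?K))"
    by (rule embedding_map_imp_homeomorphic_space)
  moreover have "metrizable_space (subtopology (euclidean :: (expr \<Rightarrow> real) topology) (\<Phi> ` topspace (subtopology ?W ?K)))"
    by (rule metrizable_space_subtopology[OF metrizable_space_euclidean])
  ultimately show ?thesis using homeomorphic_metrizable_space by blast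
qed

end

theorem corollary2p9:
  fixes L :: "('a::polish_space \<Rightarrow> real) set"
    and c :: "('a \<Rightarrow> real) \<Rightarrow> real"
  assumes "admissible_space L"
    and "capacity L c"
  shows "compactin (weak_star L c) (Kplus L c) \<and>
         metrizable_space (subtopology (weak_star L c) (Kplus L c))"
proof -
  interpret capsetup L c by (rule capsetup.intro[OF assms])
  show ?thesis using K_compact K_metrizable by (rule conjI)
qed

end
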